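(* Let $\mathcal A$ be the attraction basin of $x_0$ for the auxiliary flow $\Phi$. Then $\mathcal A$ is open, and: (i) the restriction $f|_{\mathcal A}$ is injective; (ii) $f(\mathcal A)$ is star-shaped with respect to $y_0=f(x_0)$; (iii) $\mathcal A$ is maximal with these properties: every open connected set $C\subseteq D$ containing $x_0$ such that $f|_C$ is injective and $f(C)$ is star-shaped with respect to $y_0$ satisfies $C\subseteq\mathcal A$.
   Context: Standing setting: $X,Y$ are real Banach spaces, $D\subseteq X$ is a nonempty open connected set, $f:D\to Y$ is a local homeomorphism (every point has an open neighbourhood mapped homeomorphically onto an open set), $x_0\in D$, $y_0=f(x_0)$. A flow in $D$ is a map $\Phi:D_\Phi\to D$ such that: (i) $D_\Phi$ is an open subset of $D\times\mathbb R$ and $\Phi$ is continuous; (ii) for each $x\in D$, $\{t:(x,t)\in D_\Phi\}$ is an interval containing $0$; (iii) $\Phi(x,0)=x$; (iv) if $(x,t_1),(x,t_1+t_2)\in D_\Phi$ then $(\Phi(x,t_1),t_2)\in D_\Phi$ and $\Phi(\Phi(x,t_1),t_2)=\Phi(x,t_1+t_2)$. The trajectory through $x$ is global in the future if $\{x\}\times[0,+\infty)\subseteq D_\Phi$. Let $\Psi(y,t)=y_0+e^{-t}(y-y_0)$ for $y\in Y,t\in\mathbb R$. The auxiliary flow $\Phi$ is the unique flow in $D$ of maximal domain with $f(\Phi(x,t))=\Psi(f(x),t)$ for all $(x,t)\in D_\Phi$; for each $x$, $t\mapsto\Phi(x,t)$ is the maximal continuous lifting by $f$ of $t\mapsto\Psi(f(x),t)$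 through $x$ at $t=0$. The attraction basin $\mathcal A$ of $x_0$ is the set of $x\in D$ whose trajectory is global in the future and satisfies $\Phi(x,t)\to x_0$ as $t\to+\infty$. *)

theory Defs
  imports "HOL-Analysis.Analysis"
begin

definition local_homeo_on :: "'a::topological_space set \<Rightarrow> ('a \<Rightarrow> 'b::topological_space) \<Rightarrow> bool" where
  "local_homeo_on D f \<longleftrightarrow>
     (\<forall>x\<in>D. \<exists>U. open U \<and> x \<in> U \<and> U \<subseteq> D \<and> open (f ` U) \<and>
                 (\<exists>g. homeomorphism U (f ` U) f g))"

definition is_flow :: "'a::topological_space set \<Rightarrow> ('a \<times> real) set \<Rightarrow> ('a \<times> real \<Rightarrow> 'a) \<Rightarrow> bool" where
  "is_flow D DPhi Phi \<longleftrightarrow>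
     open DPhi \<and> DPhi \<subseteq> D \<times> UNIV \<and> Phi ` DPhi \<subseteq> D \<and> continuous_on DPhi Phi \<and>
     (\<forall>x\<in>D. is_interval {t. (x, t) \<in> DPhi} \<and> (x, 0) \<in> DPhi) \<and>
     (\<forall>x\<in>D. Phi (x, 0) = x) \<and>
     (\<forall>x t1 t2. (x, t1) \<in> DPhi \<longrightarrow> (x, t1 + t2) \<in> DPhi \<longrightarrow>
        (Phi (x, t1), t2) \<in> DPhi \<and> Phi (Phi (x, t1), t2) = Phi (x, t1 + t2))"

definition Psi :: "'b::real_normed_vector \<Rightarrow> 'b \<Rightarrow> real \<Rightarrow> 'b" where
  "Psi y0 y t = y0 + exp (- t) *\<^sub>R (y - y0)"

definition lifts_Psi :: "('a \<Rightarrow> 'b::real_normed_vector) \<Rightarrow> 'b \<Rightarrow> ('a \<times> real) set \<Rightarrow> ('a \<times> real \<Rightarrow> 'a) \<Rightarrow> bool" where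
  "lifts_Psi f y0 DPhi Phi \<longleftrightarrow> (\<forall>(x, t)\<in>DPhi. f (Phi (x, t)) = Psi y0 (f x) t)"

definition auxiliary_flow :: "'a::topological_space set \<Rightarrow> ('a \<Rightarrow> 'b::real_normed_vector) \<Rightarrow> 'a
     \<Rightarrow> ('a \<times> real) set \<Rightarrow> ('a \<times> real \<Rightarrow> 'a) \<Rightarrow> bool" where
  "auxiliary_flow D f x0 DPhi Phi \<longleftrightarrow>
     is_flow D DPhi Phi \<and> lifts_Psi f (f x0) DPhi Phi \<and>
     (\<forall>DPhi' Phi'. is_flow D DPhi' Phi' \<and> lifts_Psi f (f x0) DPhi' Phi' \<longrightarrow> DPhi' \<subseteq> DPhi)"

definition attraction_basin :: "'a::topological_space set \<Rightarrow> 'a \<Rightarrow> ('a \<times> real) set \<Rightarrow> ('a \<times> real \<Rightarrow> 'a) \<Rightarrow> 'a set" where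
  "attraction_basin D x0 DPhi Phi =
     {x \<in> D. (\<forall>t\<ge>0. (x, t) \<in> DPhi) \<and> ((\<lambda>t. Phi (x, t)) \<longlongrightarrow> x0) at_top}"

definition star_shaped_wrt :: "'b::real_vector \<Rightarrow> 'b set \<Rightarrow> bool" where
  "star_shaped_wrt y0 S \<longleftrightarrow> y0 \<in> S \<and> (\<forall>y\<in>S. closed_segment y0 y \<subseteq> S)"

end

theory Submission
  imports Defs
begin



lemma lift_unique:
  fixes p q :: "real \<Rightarrow> 'a::t2_space" and f :: "'a \<Rightarrow> 'b"
  assumes lh: "\<And>x. x \<in> D \<Longrightarrow> \<exists>U. open U \<and> x \<in> U \<and> inj_on f U"
    and S: "connected S" and cp: "continuous_on S p" and cq: "continuous_on S q"
    and pD: "p ` S \<subseteq> D" and fe: "\<And>s. s \<in> S \<Longrightarrow> f (p s) = f (q s)"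
    and a: "a \<in> S" "p a = q a" and b: "b \<in> S"
  shows "p b = q b"
proof -
  let ?T = "{s\<in>S. p s = q s}"
  have cl: "closedin (top_of_set S) ?T"
  proof -
    have "continuous_on S (\<lambda>s. (p s, q s))" using cp cq by (intro continuous_intros)
    moreover have "closed {z::'a\<times>'a. fst z = snd z}"
      by (rule closed_Collect_eq) (auto intro: continuous_intros)
    ultimately have "closedin (top_of_set S) (S \<inter> (\<lambda>s. (p s, q s)) -` {z. fst z = snd z})"
      by (rule continuous_closedin_preimage)
    moreover have "S \<inter> (\<lambda>s. (p s, q s)) -` {z. fst z = snd z} = ?T" by auto
    ultimately show ?thesis by simp
  qed
  have op: "openin (top_of_set S) ?T"
  proof (subst openin_subopen, intro ballI)
    fix s assume s: "s \<in> ?T"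
    then have "p s \<in> D" using pD by auto
    then obtain U where U: "open U" "p s \<in> U" "inj_on f U" using lh by blast
    have o1: "openin (top_of_set S) (S \<inter> p -` U)" by (rule continuous_openin_preimage_gen[OF cp U(1)])
    have o2: "openin (top_of_set S) (S \<inter> q -` U)" by (rule continuous_openin_preimage_gen[OF cq U(1)])
    have "openin (top_of_set S) ((S \<inter> p -` U) \<inter> (S \<inter> q -` U))" using o1 o2 by auto
    moreover have "s \<in> (S \<inter> p -` U) \<inter> (S \<inter> q -` U)" using s U by auto
    moreover have "(S \<inter> p -` U) \<inter> (S \<inter> q -` U) \<subseteq> ?T"
      using U(3) fe by (auto simp: inj_on_def)
    ultimately show "\<exists>T. openin (top_of_set S) T \<and> s \<in> T \<and> T \<subseteq> ?T" by blast
  qed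
  have "?T = {} \<or> ?T = S" using S cl op unfolding connected_clopen by blast
  then show ?thesis using a b by auto
qed




lemma Psi_0[simp]: "Psi y0 y 0 = y" by (simp add: Psi_def)
lemma Psi_add: "Psi y0 (Psi y0 y a) b = Psi y0 y (a + b)"
  by (simp add: Psi_def scaleR_scaleR exp_add[symmetric] algebra_simps)
lemma Psi_seg: "t \<ge> 0 \<Longrightarrow> Psi y0 y t \<in> closed_segment y0 y"
  unfolding closed_segment_def Psi_def
  by (rule CollectI, rule exI[of _ "exp (-t)"]) (auto simp: algebra_simps)
lemma Psi_tendsto: "((\<lambda>t. Psi y0 y t) \<longlongrightarrow> y0) at_top"
proof -
  have "((\<lambda>t::real. exp (-t)) \<longlongrightarrow> 0) at_top"
    using filterlim_compose[OF exp_at_bot filterlim_uminus_at_bot_at_top] by simp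
  then have "((\<lambda>t. y0 + exp (-t) *\<^sub>R (y - y0)) \<longlongrightarrow> y0 + 0 *\<^sub>R (y - y0)) at_top"
    by (intro tendsto_intros)
  then show ?thesis by (simp add: Psi_def)
qed
lemma cont_Psi[continuous_intros]:
  "continuous_on S a \<Longrightarrow> continuous_on S b \<Longrightarrow> continuous_on S (\<lambda>x. Psi y0 (a x) (b x))"
  unfolding Psi_def by (intro continuous_intros)

lemma interval_union:
  fixes M :: "real set"
  assumes M: "is_interval M" and sub: "M \<subseteq> \<Union>F"
    and F: "\<And>A. A \<in> F \<Longrightarrow> is_interval A \<and> A \<inter> M \<noteq> {}"
  shows "is_interval (\<Union>F)"
  unfolding is_interval_1
proof (intro ballI allI impI)
  fix s1 s2 s assume "s1 \<in> \<Union>F" "s2 \<in> \<Union>F" and s: "s1 \<le> s \<and> s \<le> s2"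
  then obtain A1 A2 where A: "A1 \<in> F" "A2 \<in> F" "s1 \<in> A1" "s2 \<in> A2" by auto
  obtain p1 p2 where p: "p1 \<in> A1" "p1 \<in> M" "p2 \<in> A2" "p2 \<in> M" using F A by blast
  have i1: "is_interval A1" and i2: "is_interval A2" using F A by auto
  show "s \<in> \<Union>F"
  proof (cases "s \<le> p1")
    case True
    then have "s \<in> A1" using i1 A p s unfolding is_interval_1 by blast
    then show ?thesis using A by auto
  next
    case f1: False
    show ?thesis
    proof (cases "p2 \<le> s")
      case True
      then have "s \<in> A2" using i2 A p s unfolding is_interval_1 by blast
      then show ?thesis using A by auto
    next
      case False
      then have "p1 \<le> s" "s \<le> p2" using f1 by auto
      then have "s \<in> M" using M p unfolding is_interval_1 by blast
      then show ?thesis using sub by auto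
    qed
  qed
qed

locale basin =
  fixes D :: "'a::banach set" and f :: "'a \<Rightarrow> 'b::banach"
    and DPhi :: "('a \<times> real) set" and Phi :: "'a \<times> real \<Rightarrow> 'a" and x0 :: 'a
  assumes openD: "open D" and lh: "local_homeo_on D f" and x0D: "x0 \<in> D"
    and aux: "auxiliary_flow D f x0 DPhi Phi"
begin

abbreviation "y0 \<equiv> f x0"

lemma flow: "is_flow D DPhi Phi" using aux by (simp add: auxiliary_flow_def)
lemma lifts: "(x,t) \<in> DPhi \<Longrightarrow> f (Phi (x,t)) = Psi y0 (f x) t"
  using aux by (auto simp: auxiliary_flow_def lifts_Psi_def)
lemma maximal: "is_flow D E P \<Longrightarrow> lifts_Psi f y0 E P \<Longrightarrow> E \<subseteq> DPhi"
  using aux by (auto simp: auxiliary_flow_def)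
lemma openDPhi: "open DPhi" using flow by (simp add: is_flow_def)
lemma inD: "(x,t) \<in> DPhi \<Longrightarrow> x \<in> D" using flow by (auto simp: is_flow_def)
lemma PhiD: "(x,t) \<in> DPhi \<Longrightarrow> Phi (x,t) \<in> D" using flow by (auto simp: is_flow_def)
lemma contPhi: "continuous_on DPhi Phi" using flow by (simp add: is_flow_def)
lemma zero_in: "x \<in> D \<Longrightarrow> (x,0) \<in> DPhi" using flow by (simp add: is_flow_def)
lemma Phi0[simp]: "x \<in> D \<Longrightarrow> Phi (x,0) = x" using flow by (simp add: is_flow_def)
lemma slice_int: "x \<in> D \<Longrightarrow> is_interval {t. (x,t) \<in> DPhi}" using flow by (simp add: is_flow_def)
lemma between: "(x,a) \<in> DPhi \<Longrightarrow> (x,b) \<in> DPhi \<Longrightarrow> a \<le> s \<Longrightarrow> s \<le> b \<Longrightarrow> (x,s) \<in> DPhi"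
  using slice_int[OF inD] unfolding is_interval_1 by blast
lemma between_seg: "(x,a) \<in> DPhi \<Longrightarrow> (x,b) \<in> DPhi \<Longrightarrow> s \<in> closed_segment a b \<Longrightarrow> (x,s) \<in> DPhi"
  by (auto simp: closed_segment_eq_real_ivl split: if_splits intro: between)
lemma group: "(x,a) \<in> DPhi \<Longrightarrow> (x,b) \<in> DPhi \<Longrightarrow>
   (Phi (x,a), b - a) \<in> DPhi \<and> Phi (Phi (x,a), b - a) = Phi (x,b)"
proof -
  assume h: "(x,a) \<in> DPhi" "(x,b) \<in> DPhi"
  have "\<forall>x t1 t2. (x, t1) \<in> DPhi \<longrightarrow> (x, t1 + t2) \<in> DPhi \<longrightarrow>
        (Phi (x, t1), t2) \<in> DPhi \<and> Phi (Phi (x, t1), t2) = Phi (x, t1 + t2)"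
    using flow unfolding is_flow_def by blast
  from this[rule_format, of x a "b - a"] h show ?thesis by simp
qed

lemma loc_inj: "x \<in> D \<Longrightarrow> \<exists>U. open U \<and> x \<in> U \<and> inj_on f U"
proof -
  assume "x \<in> D"
  then obtain U g where U: "open U" "x \<in> U" "homeomorphism U (f ` U) f g"
    using lh unfolding local_homeo_on_def by blast
  have "inj_on f U" using U(3) unfolding homeomorphism_def by (metis inj_on_inverseI)
  then show ?thesis using U by blast
qed

lemma contf: "continuous_on D f"
proof -
  have "D \<subseteq> \<Union>{U. open U \<and> U \<subseteq> D \<and> continuous_on U f}"
  proof
    fix x assume "x \<in> D"
    then obtain U g where U: "open U" "x \<in> U" "U \<subseteq> D" "homeomorphism U (f ` U) f g"
      using lh unfolding local_homeo_on_def by blast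
    then have "continuous_on U f" unfolding homeomorphism_def by simp
    then show "x \<in> \<Union>{U. open U \<and> U \<subseteq> D \<and> continuous_on U f}" using U by blast
  qed
  then have "D = \<Union>{U. open U \<and> U \<subseteq> D \<and> continuous_on U f}" by blast
  moreover have "continuous_on (\<Union>{U. open U \<and> U \<subseteq> D \<and> continuous_on U f}) f"
    by (rule continuous_on_open_Union) auto
  ultimately show ?thesis by simp
qed

lemma open_map: assumes V: "open V" "V \<subseteq> D" shows "open (f ` V)"
  unfolding open_subopen[of "f ` V"]
proof (intro ballI)
  fix y assume "y \<in> f ` V"
  then obtain x where x: "x \<in> V" "y = f x" by auto
  then obtain U g where U: "open U" "x \<in> U" "U \<subseteq> D" "open (f ` U)" "homeomorphism U (f ` U) f g"
    using lh V unfolding local_homeo_on_def by blast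
  have "openin (top_of_set U) (V \<inter> U)" using V(1) by (simp add: openin_open_Int Int_commute)
  then have "openin (top_of_set (f ` U)) (f ` (V \<inter> U))" by (rule homeomorphism_imp_open_map[OF U(5)])
  then have "open (f ` (V \<inter> U))" using U(4) by (rule openin_open_trans)
  moreover have "y \<in> f ` (V \<inter> U)" using x U by auto
  moreover have "f ` (V \<inter> U) \<subseteq> f ` V" by auto
  ultimately show "\<exists>T. open T \<and> y \<in> T \<and> T \<subseteq> f ` V" by (intro exI[where x="f ` (V \<inter> U)"] conjI)
qed

lemma cont_traj: "(\<And>s. s \<in> S \<Longrightarrow> (w, s - c) \<in> DPhi) \<Longrightarrow> continuous_on S (\<lambda>s. Phi (w, s - c))"
  by (rule continuous_on_compose2[OF contPhi]) (auto intro!: continuous_intros)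

end




locale basinC = basin +
  fixes C :: "'a set"
  assumes openC: "open C" and CD: "C \<subseteq> D" and injC: "inj_on f C"
    and starC: "star_shaped_wrt (f x0) (f ` C)"
begin

definition g where "g = inv_into C f"
abbreviation "FC \<equiv> f ` C"

lemma FC_open: "open FC" using open_map[OF openC CD] .
lemma gC: "y \<in> FC \<Longrightarrow> g y \<in> C" unfolding g_def by (auto simp: inv_into_into)
lemma fg: "y \<in> FC \<Longrightarrow> f (g y) = y" unfolding g_def by (auto simp: f_inv_into_f)
lemma gf: "x \<in> C \<Longrightarrow> g (f x) = x" unfolding g_def using injC by (simp add: inv_into_f_f)
lemma gD: "y \<in> FC \<Longrightarrow> g y \<in> D" using gC CD by blast

lemma cont_g: "continuous_on FC g"
proof (rule continuous_on_inverse_open_map[where S=C and f=f])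
  show "continuous_on C f" using contf CD by (rule continuous_on_subset)
  show "f ` C = FC" by simp
  show "\<And>x. x \<in> C \<Longrightarrow> g (f x) = x" by (rule gf)
  fix U assume "openin (top_of_set C) U"
  then have "open U" "U \<subseteq> C" using openC openin_open_trans openin_imp_subset by blast+
  then have "open (f ` U)" using open_map CD by blast
  then show "openin (top_of_set FC) (f ` U)" using \<open>U \<subseteq> C\<close> by (intro open_subset) auto
qed

lemma y0FC: "y0 \<in> FC" using starC by (simp add: star_shaped_wrt_def)
lemma segFC: "y \<in> FC \<Longrightarrow> closed_segment y0 y \<subseteq> FC" using starC unfolding star_shaped_wrt_def by blast

lemma T_up: "Psi y0 y c \<in> FC \<Longrightarrow> c \<le> s \<Longrightarrow> Psi y0 y s \<in> FC"
proof -
  assume h: "Psi y0 y c \<in> FC" "c \<le> s"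
  have "Psi y0 y s = Psi y0 (Psi y0 y c) (s - c)" by (simp add: Psi_add)
  also have "\<dots> \<in> closed_segment y0 (Psi y0 y c)" using h by (intro Psi_seg) simp
  finally show ?thesis using segFC[OF h(1)] by blast
qed

lemma seg_shift: "(\<sigma>::real) \<in> closed_segment c s \<Longrightarrow> \<sigma> - c \<in> closed_segment 0 (s - c)"
  by (auto simp: closed_segment_eq_real_ivl split: if_splits)

lemma subA:
  assumes c: "Psi y0 (f x) c \<in> FC" and w: "(g (Psi y0 (f x) c), s - c) \<in> DPhi"
    and s: "Psi y0 (f x) s \<in> FC"
  shows "Phi (g (Psi y0 (f x) c), s - c) = g (Psi y0 (f x) s)"
proof -
  define w where "w = g (Psi y0 (f x) c)"
  have wC: "w \<in> C" using gC c w_def by auto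
  have w0: "(w, 0) \<in> DPhi" using wC CD zero_in by blast
  have inS: "(w, \<sigma> - c) \<in> DPhi" if "\<sigma> \<in> closed_segment c s" for \<sigma>
    using between_seg[OF w0 w[folded w_def] seg_shift[OF that]] .
  have inF: "Psi y0 (f x) \<sigma> \<in> FC" if "\<sigma> \<in> closed_segment c s" for \<sigma>
  proof (cases "c \<le> s")
    case True
    then have "c \<le> \<sigma>" using that by (auto simp: closed_segment_eq_real_ivl)
    then show ?thesis using T_up c by blast
  next
    case False
    then have "s \<le> \<sigma>" using that by (auto simp: closed_segment_eq_real_ivl)
    then show ?thesis using T_up s by blast
  qed
  have "Phi (w, s - c) = g (Psi y0 (f x) s)"
  proof (rule lift_unique[where D=D and f=f and S="closed_segment c s" and a=c])
    show "\<And>x. x \<in> D \<Longrightarrow> \<exists>U. open U \<and> x \<in> U \<and> inj_on f U" by (rule loc_inj)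
    show "connected (closed_segment c s)" by simp
    show "continuous_on (closed_segment c s) (\<lambda>\<sigma>. Phi (w, \<sigma> - c))" using inS by (rule cont_traj)
    show "continuous_on (closed_segment c s) (\<lambda>\<sigma>. g (Psi y0 (f x) \<sigma>))"
      by (rule continuous_on_compose2[OF cont_g]) (auto intro!: continuous_intros inF)
    show "(\<lambda>\<sigma>. Phi (w, \<sigma> - c)) ` closed_segment c s \<subseteq> D" using inS PhiD by blast
    show "f (Phi (w, \<sigma> - c)) = f (g (Psi y0 (f x) \<sigma>))" if "\<sigma> \<in> closed_segment c s" for \<sigma>
    proof -
      have "f (Phi (w, \<sigma> - c)) = Psi y0 (f w) (\<sigma> - c)" using lifts inS[OF that] by blast
      also have "f w = Psi y0 (f x) c" using fg c w_def by simp
      finally show ?thesis using fg[OF inF[OF that]] by (simp add: Psi_add)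
    qed
    show "c \<in> closed_segment c s" by simp
    show "Phi (w, c - c) = g (Psi y0 (f x) c)" using wC CD w_def by auto
    show "s \<in> closed_segment c s" by simp
  qed
  then show ?thesis using w_def by simp
qed

definition Ob where "Ob = {x. \<exists>a. (x, a) \<in> DPhi \<and> Phi (x, a) \<in> C}"

lemma subA':
  assumes a: "(x,a) \<in> DPhi" "Phi (x,a) \<in> C" and s: "(x,s) \<in> DPhi" "Psi y0 (f x) s \<in> FC"
  shows "Phi (x,s) = g (Psi y0 (f x) s)"
proof -
  have fa: "Psi y0 (f x) a = f (Phi (x,a))" using lifts a by simp
  then have aF: "Psi y0 (f x) a \<in> FC" using a by simp
  have ga: "g (Psi y0 (f x) a) = Phi (x,a)" using fa gf a by simp
  have gr: "(Phi (x,a), s - a) \<in> DPhi \<and> Phi (Phi (x,a), s - a) = Phi (x,s)" using group a s by blast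
  then show ?thesis using subA[OF aF _ s(2)] ga by simp
qed

definition E3c where "E3c c = {(x,t). x \<in> Ob \<and> Psi y0 (f x) c \<in> FC \<and> (g (Psi y0 (f x) c), t - c) \<in> DPhi}"
definition V where "V x c t = Phi (g (Psi y0 (f x) c), t - c)"

lemma W_le:
  assumes 1: "(x,t) \<in> E3c c1" and 2: "(x,t) \<in> E3c c2" and le: "c1 \<le> c2"
  shows "V x c1 t = V x c2 t"
proof -
  have c1: "Psi y0 (f x) c1 \<in> FC" "(g (Psi y0 (f x) c1), t - c1) \<in> DPhi" using 1 by (auto simp: E3c_def)
  have c2: "Psi y0 (f x) c2 \<in> FC" "(g (Psi y0 (f x) c2), t - c2) \<in> DPhi" using 2 by (auto simp: E3c_def)
  show ?thesis
  proof (cases "c1 \<le> t")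
    case True
    then have tF: "Psi y0 (f x) t \<in> FC" using T_up c1 by blast
    show ?thesis unfolding V_def using subA[OF c1 tF] subA[OF c2 tF] by simp
  next
    case False
    define w2 where "w2 = g (Psi y0 (f x) c2)"
    have w2D: "w2 \<in> D" using gD c2 w2_def by simp
    have "(w2, c1 - c2) \<in> DPhi"
      using between[OF c2(2)[folded w2_def] zero_in[OF w2D]] False le by simp
    then have e: "Phi (w2, c1 - c2) = g (Psi y0 (f x) c1)" using subA[OF c2(1) _ c1(1)] w2_def by simp
    have "(Phi (w2, c1 - c2), (t - c2) - (c1 - c2)) \<in> DPhi \<and>
          Phi (Phi (w2, c1 - c2), (t - c2) - (c1 - c2)) = Phi (w2, t - c2)"
      using group[OF \<open>(w2, c1 - c2) \<in> DPhi\<close> c2(2)[folded w2_def]] .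
    then show ?thesis unfolding V_def using e w2_def by simp
  qed
qed

lemma W: "(x,t) \<in> E3c c1 \<Longrightarrow> (x,t) \<in> E3c c2 \<Longrightarrow> V x c1 t = V x c2 t"
  by (metis W_le linear)

lemma DPhi_E3:
  assumes a: "(x,a) \<in> DPhi" "Phi (x,a) \<in> C" and t: "(x,t) \<in> DPhi"
  shows "(x,t) \<in> E3c a \<and> V x a t = Phi (x,t)"
proof -
  have fa: "Psi y0 (f x) a = f (Phi (x,a))" using lifts a by simp
  have ga: "g (Psi y0 (f x) a) = Phi (x,a)" using fa gf a by simp
  have gr: "(Phi (x,a), t - a) \<in> DPhi \<and> Phi (Phi (x,a), t - a) = Phi (x,t)" using group a t by blast
  have "x \<in> Ob" using a unfolding Ob_def by blast
  then show ?thesis using gr ga fa a unfolding E3c_def V_def by auto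
qed

definition E where "E = DPhi \<union> (\<Union>c. E3c c)"
definition PhiE where "PhiE p = (if p \<in> DPhi then Phi p else V (fst p) (SOME c. p \<in> E3c c) (snd p))"

lemma K: "(x,t) \<in> E3c c \<Longrightarrow> PhiE (x,t) = V x c t"
proof -
  assume h: "(x,t) \<in> E3c c"
  show ?thesis
  proof (cases "(x,t) \<in> DPhi")
    case True
    from h have "x \<in> Ob" by (simp add: E3c_def)
    then obtain a where a: "(x,a) \<in> DPhi" "Phi (x,a) \<in> C" unfolding Ob_def by blast
    from DPhi_E3[OF a True] have "(x,t) \<in> E3c a" "V x a t = Phi (x,t)" by auto
    then show ?thesis using W[OF h] True by (simp add: PhiE_def)
  next
    case False
    have "(x,t) \<in> E3c (SOME c. (x,t) \<in> E3c c)" using h by (rule someI)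
    then show ?thesis using W[OF h] False by (simp add: PhiE_def)
  qed
qed

end


context basinC begin

lemma Ob_D: "x \<in> Ob \<Longrightarrow> x \<in> D" unfolding Ob_def using inD by blast

lemma open_Ob: "open Ob"
proof -
  have "Ob = fst ` (DPhi \<inter> Phi -` C)" unfolding Ob_def by force
  moreover have "open (DPhi \<inter> Phi -` C)" by (rule continuous_open_preimage[OF contPhi openDPhi openC])
  ultimately show ?thesis using open_image_fst by metis
qed

lemma cf_fst: "continuous_on (Ob \<times> (UNIV::real set)) (\<lambda>p. f (fst p))"
  by (rule continuous_on_compose2[OF contf]) (auto intro: continuous_intros simp: Ob_D)

lemma open_E3c: "open (E3c c)"
proof -
  define P where "P = (Ob \<times> (UNIV::real set)) \<inter> (\<lambda>p. Psi y0 (f (fst p)) c) -` FC"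
  define m where "m = (\<lambda>p. (g (Psi y0 (f (fst p)) c), snd p - c))"
  have c1: "continuous_on (Ob \<times> (UNIV::real set)) (\<lambda>p. Psi y0 (f (fst p)) c)"
    using cf_fst by (intro continuous_intros)
  have oP: "open P" unfolding P_def
    by (rule continuous_open_preimage[OF c1]) (auto intro: open_Times open_Ob FC_open)
  have c2: "continuous_on P (\<lambda>p. g (Psi y0 (f (fst p)) c))"
    by (rule continuous_on_compose2[OF cont_g continuous_on_subset[OF c1]]) (auto simp: P_def)
  have cm: "continuous_on P m" unfolding m_def using c2 by (intro continuous_intros)
  have "E3c c = P \<inter> m -` DPhi" unfolding E3c_def P_def m_def by auto
  then show ?thesis using continuous_open_preimage[OF cm oP openDPhi] by simp
qed

lemma open_E: "open E" unfolding E_def using openDPhi open_E3c by auto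

lemma E3c_D: "(x,t) \<in> E3c c \<Longrightarrow> x \<in> D" unfolding E3c_def using Ob_D by auto

lemma E3c_val: "(x,t) \<in> E3c c \<Longrightarrow> PhiE (x,t) \<in> D"
  using K[of x t c] unfolding E3c_def V_def using PhiD by auto

lemma PhiE_DPhi: "p \<in> DPhi \<Longrightarrow> PhiE p = Phi p" by (simp add: PhiE_def)

lemma cont_PhiE: "continuous_on E PhiE"
proof -
  have "E = \<Union>(insert DPhi (range E3c))" unfolding E_def by auto
  moreover have "continuous_on (\<Union>(insert DPhi (range E3c))) PhiE"
  proof (rule continuous_on_open_Union)
    fix s assume "s \<in> insert DPhi (range E3c)"
    then show "open s" using openDPhi open_E3c by auto
    show "continuous_on s PhiE"
    proof (cases "s = DPhi")
      case True
      show ?thesis unfolding True using contPhi by (rule continuous_on_eq) (simp add: PhiE_DPhi)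
    next
      case False
      then obtain c where s: "s = E3c c" using \<open>s \<in> _\<close> by auto
      define m where "m = (\<lambda>p. (g (Psi y0 (f (fst p)) c), snd p - c))"
      have "s \<subseteq> Ob \<times> UNIV" using s by (auto simp: E3c_def)
      then have "continuous_on s (\<lambda>p. f (fst p))" by (rule continuous_on_subset[OF cf_fst])
      then have c1: "continuous_on s (\<lambda>p. Psi y0 (f (fst p)) c)" by (intro continuous_intros)
      have c2: "continuous_on s (\<lambda>p. g (Psi y0 (f (fst p)) c))"
        by (rule continuous_on_compose2[OF cont_g c1]) (auto simp: s E3c_def)
      have cm: "continuous_on s m" unfolding m_def using c2 by (intro continuous_intros)
      have "continuous_on s (\<lambda>p. Phi (m p))"
        by (rule continuous_on_compose2[OF contPhi cm]) (auto simp: s m_def E3c_def)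
      moreover have "\<forall>p\<in>s. Phi (m p) = PhiE p"
        using K by (auto simp: s m_def V_def)
      ultimately show ?thesis using continuous_on_eq by blast
    qed
  qed
  ultimately show ?thesis by simp
qed

lemma slice_E: assumes x: "x \<in> D" shows "is_interval {t. (x,t) \<in> E}"
proof (cases "x \<in> Ob")
  case False
  then have "{t. (x,t) \<in> E} = {t. (x,t) \<in> DPhi}" unfolding E_def E3c_def by auto
  then show ?thesis using slice_int[OF x] by simp
next
  case True
  then obtain a where a: "(x,a) \<in> DPhi" "Phi (x,a) \<in> C" unfolding Ob_def by blast
  define I where "I = {t. (x,t) \<in> DPhi}"
  define Tx where "Tx = {c. Psi y0 (f x) c \<in> FC}"
  define J where "J = (\<lambda>c. {t. (g (Psi y0 (f x) c), t - c) \<in> DPhi})"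
  have sl: "{t. (x,t) \<in> E} = \<Union>(insert I (J ` Tx))"
    unfolding E_def E3c_def I_def J_def Tx_def using True by auto
  have aT: "a \<in> Tx" unfolding Tx_def using lifts[OF a(1)] a(2) by (metis imageI mem_Collect_eq)
  have aI: "a \<in> I" unfolding I_def using a by simp
  have iI: "is_interval I" unfolding I_def using slice_int[OF x] .
  have iT: "is_interval Tx" unfolding is_interval_1 Tx_def using T_up by blast
  have iJ: "is_interval (J c)" if "c \<in> Tx" for c
    unfolding is_interval_1 J_def
  proof (intro ballI allI impI)
    fix t1 t2 s assume "t1 \<in> {t. (g (Psi y0 (f x) c), t - c) \<in> DPhi}"
      "t2 \<in> {t. (g (Psi y0 (f x) c), t - c) \<in> DPhi}" "t1 \<le> s \<and> s \<le> t2"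
    then show "s \<in> {t. (g (Psi y0 (f x) c), t - c) \<in> DPhi}" using between[of _ "t1 - c" "t2 - c" "s - c"] by auto
  qed
  have cJ: "c \<in> J c" if "c \<in> Tx" for c
    unfolding J_def using that gD zero_in by (auto simp: Tx_def)
  have iM: "is_interval (I \<union> Tx)"
  proof -
    have "is_interval (\<Union>{I, Tx})"
      by (rule interval_union[where M="{a}"]) (use aI aT iI iT in \<open>auto simp: is_interval_1\<close>)
    then show ?thesis by simp
  qed
  have "is_interval (\<Union>(insert I (J ` Tx)))"
  proof (rule interval_union[OF iM])
    show "I \<union> Tx \<subseteq> \<Union>(insert I (J ` Tx))" using cJ by blast
    fix A assume "A \<in> insert I (J ` Tx)"
    then show "is_interval A \<and> A \<inter> (I \<union> Tx) \<noteq> {}"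
      using iI aI iJ cJ by auto
  qed
  then show ?thesis using sl by simp
qed

lemma E_to_E3: "(x,t) \<in> E \<Longrightarrow> x \<in> Ob \<Longrightarrow> \<exists>c. (x,t) \<in> E3c c"
proof -
  assume h: "(x,t) \<in> E" "x \<in> Ob"
  show ?thesis
  proof (cases "(x,t) \<in> DPhi")
    case True
    obtain a where a: "(x,a) \<in> DPhi" "Phi (x,a) \<in> C" using h(2) unfolding Ob_def by blast
    show ?thesis using DPhi_E3[OF a True] by blast
  next
    case False then show ?thesis using h unfolding E_def by auto
  qed
qed

lemma group_E:
  assumes 1: "(x,t1) \<in> E" and 2: "(x,t1+t2) \<in> E"
  shows "(PhiE (x,t1), t2) \<in> E \<and> PhiE (PhiE (x,t1), t2) = PhiE (x,t1+t2)"
proof (cases "(x,t1) \<in> DPhi \<and> (x,t1+t2) \<in> DPhi")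
  case True
  then have "(Phi (x,t1), (t1+t2) - t1) \<in> DPhi \<and> Phi (Phi (x,t1), (t1+t2) - t1) = Phi (x,t1+t2)"
    using group by blast
  then show ?thesis using True by (simp add: PhiE_DPhi E_def)
next
  case False
  then have "x \<in> Ob" using 1 2 unfolding E_def E3c_def by auto
  then obtain c1 c2 where c1: "(x,t1) \<in> E3c c1" and c2: "(x,t1+t2) \<in> E3c c2"
    using E_to_E3 1 2 by blast
  define w1 where "w1 = g (Psi y0 (f x) c1)"
  define w2 where "w2 = g (Psi y0 (f x) c2)"
  define u where "u = PhiE (x,t1)"
  have h1: "Psi y0 (f x) c1 \<in> FC" "(w1, t1 - c1) \<in> DPhi" using c1 unfolding E3c_def w1_def by auto
  have h2: "Psi y0 (f x) c2 \<in> FC" "(w2, t1 + t2 - c2) \<in> DPhi" using c2 unfolding E3c_def w2_def by auto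
  have u: "u = Phi (w1, t1 - c1)" using K[OF c1] unfolding u_def V_def w1_def by simp
  have w1C: "w1 \<in> C" using gC h1 w1_def by simp
  have w10: "(w1, 0) \<in> DPhi" using w1C CD zero_in by blast
  have gu: "(Phi (w1, t1 - c1), 0 - (t1 - c1)) \<in> DPhi \<and> Phi (Phi (w1, t1 - c1), 0 - (t1 - c1)) = Phi (w1, 0)"
    using group[OF h1(2) w10] .
  have "Phi (w1, 0) = w1" using w1C CD by auto
  then have uOb: "u \<in> Ob" unfolding Ob_def using gu w1C u by (intro CollectI exI[of _ "0 - (t1 - c1)"]) simp
  have fw1: "f w1 = Psi y0 (f x) c1" using fg h1 w1_def by simp
  have fu: "f u = Psi y0 (f x) t1" using lifts[OF h1(2)] fw1 u by (simp add: Psi_add)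
  have Pu: "Psi y0 (f u) (c2 - t1) = Psi y0 (f x) c2" using fu by (simp add: Psi_add)
  have inE3: "(u, t2) \<in> E3c (c2 - t1)"
    unfolding E3c_def using uOb Pu h2 w2_def by (auto simp: algebra_simps)
  have "PhiE (u, t2) = V u (c2 - t1) t2" by (rule K[OF inE3])
  also have "\<dots> = Phi (w2, t1 + t2 - c2)" unfolding V_def using Pu w2_def by (simp add: algebra_simps)
  also have "\<dots> = PhiE (x, t1 + t2)" using K[OF c2] unfolding V_def w2_def by simp
  finally show ?thesis using inE3 u_def unfolding E_def by auto
qed

lemma lifts_E: "lifts_Psi f y0 E PhiE"
  unfolding lifts_Psi_def
proof (intro ballI, clarify)
  fix x t assume "(x,t) \<in> E"
  show "f (PhiE (x,t)) = Psi y0 (f x) t"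
  proof (cases "(x,t) \<in> DPhi")
    case True then show ?thesis using lifts by (simp add: PhiE_DPhi)
  next
    case False
    then obtain c where c: "(x,t) \<in> E3c c" using \<open>(x,t) \<in> E\<close> unfolding E_def by auto
    then have h: "Psi y0 (f x) c \<in> FC" "(g (Psi y0 (f x) c), t - c) \<in> DPhi" unfolding E3c_def by auto
    have "f (PhiE (x,t)) = Psi y0 (f (g (Psi y0 (f x) c))) (t - c)" using K[OF c] lifts[OF h(2)] by (simp add: V_def)
    then show ?thesis using fg[OF h(1)] by (simp add: Psi_add)
  qed
qed

lemma flow_E: "is_flow D E PhiE"
  unfolding is_flow_def
proof (intro conjI)
  show "open E" by (rule open_E)
  show "E \<subseteq> D \<times> UNIV" unfolding E_def using inD E3c_D by auto
  show "PhiE ` E \<subseteq> D"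
  proof clarify
    fix x t assume "(x,t) \<in> E"
    then show "PhiE (x,t) \<in> D" unfolding E_def using PhiD PhiE_DPhi E3c_val by auto
  qed
  show "continuous_on E PhiE" by (rule cont_PhiE)
  show "\<forall>x\<in>D. is_interval {t. (x, t) \<in> E} \<and> (x, 0) \<in> E"
    using slice_E zero_in unfolding E_def by auto
  show "\<forall>x\<in>D. PhiE (x, 0) = x" using zero_in PhiE_DPhi by auto
  show "\<forall>x t1 t2. (x, t1) \<in> E \<longrightarrow> (x, t1 + t2) \<in> E \<longrightarrow>
        (PhiE (x, t1), t2) \<in> E \<and> PhiE (PhiE (x, t1), t2) = PhiE (x, t1 + t2)"
    using group_E by blast
qed

lemma E_sub: "E \<subseteq> DPhi" using maximal[OF flow_E lifts_E] .

lemma main_C: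
  assumes x: "x \<in> C" and t: "t \<ge> 0"
  shows "(x,t) \<in> DPhi \<and> Phi (x,t) = g (Psi y0 (f x) t)"
proof -
  have xD: "x \<in> D" using x CD by blast
  have tF: "Psi y0 (f x) t \<in> FC" using segFC[of "f x"] Psi_seg[OF t, of y0 "f x"] x by blast
  have xOb: "x \<in> Ob" unfolding Ob_def using zero_in[OF xD] x xD by force
  have "(x,t) \<in> E3c t" unfolding E3c_def using xOb tF gD zero_in by auto
  then have xt: "(x,t) \<in> DPhi" using E_sub unfolding E_def by blast
  show ?thesis using subA'[OF zero_in[OF xD] _ xt tF] x xD xt by simp
qed

end



lemma shift_lim: "((\<lambda>s::real. P s) \<longlongrightarrow> L) at_top \<Longrightarrow> ((\<lambda>s. P (t + s)) \<longlongrightarrow> L) at_top"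
proof -
  assume h: "((\<lambda>s::real. P s) \<longlongrightarrow> L) at_top"
  have "filterlim (\<lambda>s::real. t + s) at_top at_top"
    by (rule filterlim_tendsto_add_at_top[OF tendsto_const filterlim_ident])
  from filterlim_compose[OF h this] show ?thesis .
qed

context basinC begin

lemma C_basin: assumes x0C: "x0 \<in> C" shows "C \<subseteq> attraction_basin D x0 DPhi Phi"
proof
  fix x assume x: "x \<in> C"
  have "isCont g y0" using cont_g FC_open y0FC continuous_on_eq_continuous_at by blast
  then have "((\<lambda>t. g (Psi y0 (f x) t)) \<longlongrightarrow> g y0) at_top" by (rule isCont_tendsto_compose[OF _ Psi_tendsto])
  then have l: "((\<lambda>t. g (Psi y0 (f x) t)) \<longlongrightarrow> x0) at_top" using gf[OF x0C] by simp
  have "\<forall>\<^sub>F t in at_top. g (Psi y0 (f x) t) = Phi (x,t)"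
    using eventually_ge_at_top[of "0::real"] by eventually_elim (use main_C[OF x] in auto)
  with l have "((\<lambda>t. Phi (x,t)) \<longlongrightarrow> x0) at_top" by (rule Lim_transform_eventually)
  then show "x \<in> attraction_basin D x0 DPhi Phi"
    unfolding attraction_basin_def using main_C[OF x] x CD by auto
qed

end

context basin begin

lemma C_in_A:
  assumes "open C" "C \<subseteq> D" "inj_on f C" "star_shaped_wrt y0 (f ` C)" "x0 \<in> C"
  shows "C \<subseteq> attraction_basin D x0 DPhi Phi"
proof -
  interpret basinC D f DPhi Phi x0 C by unfold_locales (use assms in auto)
  show ?thesis using C_basin assms by blast
qed

abbreviation "A \<equiv> attraction_basin D x0 DPhi Phi"

lemma A_def': "x \<in> A \<longleftrightarrow> x \<in> D \<and> (\<forall>t\<ge>0. (x,t) \<in> DPhi) \<and> ((\<lambda>t. Phi (x,t)) \<longlongrightarrow> x0) at_top"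
  by (simp add: attraction_basin_def)

lemma C0_ex: "\<exists>C0. open C0 \<and> C0 \<subseteq> D \<and> inj_on f C0 \<and> x0 \<in> C0 \<and> C0 \<subseteq> A"
proof -
  obtain U h where U: "open U" "x0 \<in> U" "U \<subseteq> D" "open (f ` U)" "homeomorphism U (f ` U) f h"
    using lh x0D unfolding local_homeo_on_def by blast
  have inj: "inj_on f U" using U(5) unfolding homeomorphism_def by (metis inj_on_inverseI)
  obtain r where r: "r > 0" "ball y0 r \<subseteq> f ` U" using U(2,4) open_contains_ball by blast
  define C0 where "C0 = U \<inter> f -` ball y0 r"
  have cU: "continuous_on U f" using contf U(3) by (rule continuous_on_subset)
  have o: "open C0" unfolding C0_def by (rule continuous_open_preimage[OF cU U(1)]) simp
  have im: "f ` C0 = ball y0 r" unfolding C0_def using r(2) by auto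
  have "\<forall>y\<in>ball y0 r. closed_segment y0 y \<subseteq> ball y0 r" using r(1)
    by (intro ballI closed_segment_subset convex_ball) simp_all
  then have st: "star_shaped_wrt y0 (f ` C0)" unfolding im star_shaped_wrt_def
    using r(1) by simp
  have x0C: "x0 \<in> C0" unfolding C0_def using U(2) r(1) by simp
  have sub: "C0 \<subseteq> D" "inj_on f C0" unfolding C0_def using U(3) inj by (auto intro: inj_on_subset)
  show ?thesis using C_in_A[OF o sub st x0C] o sub x0C by blast
qed

lemma A_forward: assumes x: "x \<in> A" and t: "t \<ge> 0" shows "Phi (x,t) \<in> A"
proof -
  have xt: "(x,t) \<in> DPhi" using x t A_def' by blast
  have st: "(Phi (x,t), s) \<in> DPhi \<and> Phi (Phi (x,t), s) = Phi (x, t + s)" if "s \<ge> 0" for s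
  proof -
    have "(x, t + s) \<in> DPhi" using x t that A_def' by simp
    from group[OF xt this] show ?thesis by simp
  qed
  have "((\<lambda>s. Phi (x, t + s)) \<longlongrightarrow> x0) at_top" using x A_def' shift_lim by blast
  moreover have "\<forall>\<^sub>F s in at_top. Phi (x, t + s) = Phi (Phi (x,t), s)"
    using eventually_ge_at_top[of "0::real"] by eventually_elim (use st in auto)
  ultimately have "((\<lambda>s. Phi (Phi (x,t), s)) \<longlongrightarrow> x0) at_top" by (rule Lim_transform_eventually)
  then show ?thesis using A_def' st PhiD xt by blast
qed

lemma back_lem: "(x,T) \<in> DPhi \<Longrightarrow> (Phi (x,T), -T) \<in> DPhi \<and> Phi (Phi (x,T), -T) = x"
proof -
  assume h: "(x,T) \<in> DPhi"
  have x: "x \<in> D" using inD h by blast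
  from group[OF h zero_in[OF x]] show ?thesis using x by simp
qed

lemma eventually_in: "x \<in> A \<Longrightarrow> open S \<Longrightarrow> x0 \<in> S \<Longrightarrow> \<forall>\<^sub>F t in at_top. Phi (x,t) \<in> S"
  using A_def' topological_tendstoD by blast

lemma A_open: "open A"
proof -
  obtain C0 where C0: "open C0" "C0 \<subseteq> D" "inj_on f C0" "x0 \<in> C0" "C0 \<subseteq> A" using C0_ex by blast
  show ?thesis unfolding open_subopen[of A]
  proof
    fix x assume x: "x \<in> A"
    have "\<forall>\<^sub>F t in at_top. Phi (x,t) \<in> C0 \<and> t \<ge> 0"
      using eventually_in[OF x C0(1,4)] eventually_ge_at_top[of "0::real"] by (rule eventually_conj)
    then obtain T where T: "Phi (x,T) \<in> C0" "T \<ge> 0" unfolding eventually_at_top_linorder by blast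
    define N where "N = (\<lambda>x'. (x', T)) -` (DPhi \<inter> Phi -` C0)"
    have "open (DPhi \<inter> Phi -` C0)" by (rule continuous_open_preimage[OF contPhi openDPhi C0(1)])
    then have oN: "open N" unfolding N_def by (rule continuous_open_vimage) (intro continuous_intros)
    have xN: "x \<in> N" unfolding N_def using T x A_def' by auto
    have "N \<subseteq> A"
    proof
      fix x' assume "x' \<in> N"
      then have x'T: "(x',T) \<in> DPhi" and zC: "Phi (x',T) \<in> C0" unfolding N_def by auto
      define z where "z = Phi (x',T)"
      have zA: "z \<in> A" using zC C0(5) z_def by blast
      have bk: "(z, -T) \<in> DPhi" "Phi (z, -T) = x'" using back_lem[OF x'T] z_def by auto
      have x'D: "x' \<in> D" using inD x'T by blast
      have gs: "(x', T + s) \<in> DPhi \<and> Phi (x', T + s) = Phi (z, s)" if "s \<ge> 0" for s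
      proof -
        have "(z, s) \<in> DPhi" using zA that A_def' by blast
        from group[OF bk(1) this] bk(2) show ?thesis by (simp add: add.commute)
      qed
      have all: "(x', t) \<in> DPhi" if "t \<ge> 0" for t
        using between[OF zero_in[OF x'D], of "T + t" t] gs[OF that] that T(2) by simp
      have "((\<lambda>s. Phi (z, -T + s)) \<longlongrightarrow> x0) at_top" using zA A_def' shift_lim[of "\<lambda>s. Phi (z,s)" x0 "-T"] by blast
      moreover have "\<forall>\<^sub>F t in at_top. Phi (z, -T + t) = Phi (x', t)"
        using eventually_ge_at_top[of T]
      proof eventually_elim
        fix t assume "T \<le> t"
        then have "t - T \<ge> 0" by simp
        from gs[OF this] show "Phi (z, -T + t) = Phi (x', t)" by simp
      qed
      ultimately have "((\<lambda>t. Phi (x', t)) \<longlongrightarrow> x0) at_top" by (rule Lim_transform_eventually)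
      then show "x' \<in> A" using A_def' x'D all by blast
    qed
    then show "\<exists>T. open T \<and> x \<in> T \<and> T \<subseteq> A" using oN xN by blast
  qed
qed

lemma A_inj: "inj_on f A"
proof
  fix x1 x2 assume x: "x1 \<in> A" "x2 \<in> A" and fe: "f x1 = f x2"
  obtain C0 where C0: "open C0" "C0 \<subseteq> D" "inj_on f C0" "x0 \<in> C0" "C0 \<subseteq> A" using C0_ex by blast
  have "\<forall>\<^sub>F t in at_top. (Phi (x1,t) \<in> C0 \<and> Phi (x2,t) \<in> C0) \<and> t \<ge> 0"
    using eventually_conj[OF eventually_in[OF x(1) C0(1,4)] eventually_in[OF x(2) C0(1,4)]]
      eventually_ge_at_top[of "0::real"] by (rule eventually_conj)
  then obtain T where T: "Phi (x1,T) \<in> C0" "Phi (x2,T) \<in> C0" "T \<ge> 0"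
    unfolding eventually_at_top_linorder by blast
  have d: "(x1,T) \<in> DPhi" "(x2,T) \<in> DPhi" using x T(3) A_def' by auto
  have "f (Phi (x1,T)) = f (Phi (x2,T))" using lifts[OF d(1)] lifts[OF d(2)] fe by simp
  then have "Phi (x1,T) = Phi (x2,T)" using C0(3) T unfolding inj_on_def by blast
  then have "Phi (Phi (x1,T), -T) = Phi (Phi (x2,T), -T)" by simp
  then show "x1 = x2" using back_lem[OF d(1)] back_lem[OF d(2)] by simp
qed

lemma A_star: "star_shaped_wrt y0 (f ` A)"
  unfolding star_shaped_wrt_def
proof (intro conjI ballI)
  obtain C0 where C0: "x0 \<in> C0" "C0 \<subseteq> A" using C0_ex by blast
  then show y0A: "y0 \<in> f ` A" by blast
  fix y assume "y \<in> f ` A"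
  then obtain x where x: "x \<in> A" "y = f x" by blast
  show "closed_segment y0 y \<subseteq> f ` A"
  proof
    fix p assume "p \<in> closed_segment y0 y"
    then obtain u where u: "0 \<le> u" "u \<le> 1" "p = (1 - u) *\<^sub>R y0 + u *\<^sub>R y"
      unfolding closed_segment_def by blast
    show "p \<in> f ` A"
    proof (cases "u = 0")
      case True then show ?thesis using u y0A by simp
    next
      case False
      then have up: "u > 0" using u by simp
      define t where "t = - ln u"
      have t0: "t \<ge> 0" unfolding t_def using up u(2) by simp
      have "exp (-t) = u" unfolding t_def using up by simp
      then have "Psi y0 y t = p" unfolding Psi_def u(3) by (simp add: algebra_simps)
      moreover have "(x,t) \<in> DPhi" using x t0 A_def' by blast
      ultimately have "f (Phi (x,t)) = p" using lifts x by simp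
      then show ?thesis using A_forward[OF x(1) t0] by blast
    qed
  qed
qed

end



theorem proposition2p1:
  fixes D :: "'a::banach set" and f :: "'a \<Rightarrow> 'b::banach"
    and DPhi :: "('a \<times> real) set" and Phi :: "'a \<times> real \<Rightarrow> 'a"
  assumes "open D" and "connected D" and "D \<noteq> {}"
    and "local_homeo_on D f"
    and "x0 \<in> D"
    and "auxiliary_flow D f x0 DPhi Phi"
  shows "open (attraction_basin D x0 DPhi Phi)
    \<and> inj_on f (attraction_basin D x0 DPhi Phi)
    \<and> star_shaped_wrt (f x0) (f ` attraction_basin D x0 DPhi Phi)
    \<and> (\<forall>C. open C \<and> connected C \<and> C \<subseteq> D \<and> x0 \<in> C \<and> inj_on f C
            \<and> star_shaped_wrt (f x0) (f ` C) \<longrightarrow> C \<subseteq> attraction_basin D x0 DPhi Phi)"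
proof -
  interpret basin D f DPhi Phi x0 using assms by unfold_locales auto
  show ?thesis using A_open A_inj A_star C_in_A by blast
qed

end
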